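(* Suppose $S\tilde DS$ is singular on $S\mathbb C^N$, let $T$ be the orthogonal projection onto $\operatorname{Ker}_{S\mathbb C^N}S\tilde DS$, and suppose $T\tilde D^2T$ is non-singular on $T\mathbb C^N$. Then $\dim T\mathbb C^N=1$ and, as $\lambda\to0$ in $\overline{\mathbb C^+}\setminus\{0\}$, $$\Gamma(\lambda)^{-1}=N\,g(\lambda)\,T[T\tilde D^2T]^{-1}T+O(1),$$ where $[T\tilde D^2T]^{-1}$ is the inverse on $T\mathbb C^N$; in particular $\Gamma(\lambda)^{-1}$ has a logarithmic singularity at $\lambda=0$.
   Context: Fix $N\ge1$, distinct points $y_1,\dots,y_N\in\mathbb R^2$, $\alpha\in\mathbb R^N$. $\mathcal G_\lambda(x)=\frac i4H_0^{(1)}(\lambda|x|)$, $g(\lambda)=-\frac1{2\pi}\log(\lambda/2)+\frac i4-\frac{\gamma}{2\pi}$ ($\gamma$ Euler's constant), $\Gamma(\lambda)$ the $N\times N$ matrix with $\Gamma(\lambda)_{jj}=\alpha_j-g(\lambda)$, $\Gamma(\lambda)_{jk}=-\mathcal G_\lambda(y_j-y_k)$ ($j\ne k$). $P$ is the orthogonal projection onto $\mathbb C(1,\dots,1)^t$, $S=I-P$; $\tilde D$ real symmetric with $\tilde D_{jj}=\alpha_j$, $\tilde D_{jk}=\frac1{2\pi}\log|y_j-y_k|$ ($j\ne k$). $O(1)$ denotes a matrix bounded in norm for small $|\lambda|$. *)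

theory Defs
  imports "HOL-Analysis.Analysis"
begin

definition besselJ0 :: "complex \<Rightarrow> complex" where
  "besselJ0 z = (\<Sum>k. (-1)^k * (z/2)^(2*k) / (of_nat (fact k))^2)"

definition besselY0 :: "complex \<Rightarrow> complex" where
  "besselY0 z = (2 / of_real pi) * (Ln (z/2) + euler_mascheroni) * besselJ0 z
     + (2 / of_real pi) * (\<Sum>k. (-1)^(k+2) * harm (k+1) * (z/2)^(2*(k+1)) / (of_nat (fact (k+1)))^2)"

definition hankel1_0 :: "complex \<Rightarrow> complex" where
  "hankel1_0 z = besselJ0 z + \<i> * besselY0 z"

definition greenG :: "complex \<Rightarrow> real^2 \<Rightarrow> complex" where
  "greenG lam x = \<i>/4 * hankel1_0 (lam * of_real (norm x))"

definition gfun :: "complex \<Rightarrow> complex" where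
  "gfun lam = - (1 / (2 * of_real pi)) * Ln (lam/2) + \<i>/4 - euler_mascheroni / (2 * of_real pi)"

definition Gamma_mat :: "('n::finite \<Rightarrow> real) \<Rightarrow> ('n \<Rightarrow> real^2) \<Rightarrow> complex \<Rightarrow> complex^'n^'n" where
  "Gamma_mat \<alpha> y lam = (\<chi> j k. if j = k then of_real (\<alpha> j) - gfun lam else - greenG lam (y j - y k))"

text \<open>P: orthogonal projection onto the constant vectors; S = I - P.\<close>
definition Pmat :: "complex^'n::finite^'n" where
  "Pmat = (\<chi> i j. 1 / of_nat CARD('n))"

definition Smat :: "complex^'n::finite^'n" where
  "Smat = mat 1 - Pmat"

definition Dtilde :: "('n::finite \<Rightarrow> real) \<Rightarrow> ('n \<Rightarrow> real^2) \<Rightarrow> complex^'n^'n" where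
  "Dtilde \<alpha> y = (\<chi> j k. if j = k then of_real (\<alpha> j)
                           else of_real (ln (dist (y j) (y k)) / (2 * pi)))"

definition mrange :: "complex^'n::finite^'n \<Rightarrow> (complex^'n) set" where
  "mrange A = {A *v u | u. True}"

definition cinner :: "complex^'n::finite \<Rightarrow> complex^'n \<Rightarrow> complex" where
  "cinner v w = (\<Sum>i\<in>UNIV. v$i * cnj (w$i))"

definition is_orth_proj :: "complex^'n::finite^'n \<Rightarrow> (complex^'n) set \<Rightarrow> bool" where
  "is_orth_proj T K \<longleftrightarrow> (\<forall>v. T *v v \<in> K) \<and> (\<forall>v\<in>K. T *v v = v)
      \<and> (\<forall>v. \<forall>w\<in>K. cinner (v - T *v v) w = 0)"

text \<open>Inverse of T X T on the subspace T C^N, extended by 0 on its orthogonal complement: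
  T (T X T + (I - T))^{-1} T.\<close>
definition restr_inv :: "complex^'n::finite^'n \<Rightarrow> complex^'n^'n \<Rightarrow> complex^'n^'n" where
  "restr_inv T X = T ** matrix_inv (T ** X ** T + (mat 1 - T)) ** T"

end

theory Submission
  imports Defs
begin

lemma geom_bound:
  fixes f :: "nat \<Rightarrow> complex"
  assumes b: "\<And>k. norm (f k) \<le> q^(k+1)" and q0: "0 \<le> q" and q1: "q \<le> 1/4"
  shows "summable f \<and> norm (suminf f) \<le> 4/3 * q"
proof -
  have g: "(\<lambda>k. q^k) sums (1/(1-q))" using geometric_sums[of q] q0 q1 by auto
  have s: "(\<lambda>k. q^(k+1)) sums (q * (1/(1-q)))"
    using sums_mult[OF g, of q] by (simp add: power_Suc)
  have sn: "summable (\<lambda>k. norm (f k))"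
    by (rule summable_comparison_test[of _ "\<lambda>k. q^(k+1)"]) (use b sums_summable[OF s] in auto)
  have "norm (suminf f) \<le> (\<Sum>k. norm (f k))" by (rule summable_norm[OF sn])
  also have "\<dots> \<le> (\<Sum>k. q^(k+1))" by (rule suminf_le) (use b sn sums_summable[OF s] in auto)
  also have "\<dots> = q * (1/(1-q))" using s sums_unique by metis
  also have "\<dots> \<le> q * (4/3)" using q0 q1 by (intro mult_left_mono) (auto simp: field_simps)
  also have "\<dots> = 4/3 * q" by simp
  finally show ?thesis using summable_norm_cancel[OF sn] by blast
qed

lemma J0_bound:
  fixes z :: complex assumes z: "norm z \<le> 1"
  shows "norm (besselJ0 z - 1) \<le> norm z^2/3"
proof -
  define a where "a k = (-1)^k * (z/2)^(2*k) / (of_nat (fact k))^2" for k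
  define q where "q = norm z^2/4"
  have q0: "0 \<le> q" and q1: "q \<le> 1/4" unfolding q_def using z
    by (auto simp: power_le_one)
  have na: "norm (a k) \<le> q^k" for k
  proof -
    have "norm (a k) = (norm z^2/4)^k / (fact k)^2"
      unfolding a_def by (simp add: norm_divide norm_mult norm_power power_mult power_divide)
    also have "\<dots> \<le> q^k" unfolding q_def
    proof -
      have f1: "(1::real) \<le> (fact k)^2" using fact_ge_1[of k] by (simp add: one_le_power)
      have "((norm z)^2/4)^k * 1 \<le> ((norm z)^2/4)^k * (fact k)^2"
        by (rule mult_left_mono[OF f1]) auto
      then show "((norm z)^2/4)^k / (fact k)^2 \<le> ((norm z)^2/4)^k"
        using f1 by (simp add: divide_le_eq)
    qed
    finally show ?thesis .
  qed
  have sa: "summable a"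
    by (rule summable_comparison_test[of _ "\<lambda>k. q^k"]) (use na q1 q0 in auto)
  have "besselJ0 z = a 0 + (\<Sum>k. a (Suc k))"
    unfolding besselJ0_def a_def[symmetric] using suminf_split_head[OF sa] by simp
  moreover have "a 0 = 1" by (simp add: a_def)
  moreover have "norm (\<Sum>k. a (Suc k)) \<le> 4/3 * q"
  proof -
    have "\<And>k. norm (a (Suc k)) \<le> q^(k+1)" using na by (metis Suc_eq_plus1)
    then show ?thesis using geom_bound[of "\<lambda>k. a (Suc k)" q] q0 q1 by blast
  qed
  ultimately show ?thesis unfolding q_def by simp
qed

definition ytail :: "complex \<Rightarrow> complex" where
  "ytail z = (\<Sum>k. (-1)^(k+2) * harm (k+1) * (z/2)^(2*(k+1)) / (of_nat (fact (k+1)))^2)"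

lemma harm_le_n: "harm n \<le> (real n)"
proof -
  have "harm n = (\<Sum>k=1..n. inverse (real k))" by (simp add: harm_def)
  also have "\<dots> \<le> of_nat (card {1..n}) * 1"
    by (rule sum_bounded_above) (auto simp: field_simps)
  finally show ?thesis by simp
qed

lemma ytail_bound:
  fixes z :: complex assumes z: "norm z \<le> 1"
  shows "norm (ytail z) \<le> norm z^2/3"
proof -
  define q where "q = norm z^2/4"
  have q0: "0 \<le> q" and q1: "q \<le> 1/4" unfolding q_def using z
    by (auto simp: power_le_one)
  have nb: "norm ((-1)^(k+2) * harm (k+1) * (z/2)^(2*(k+1)) / (of_nat (fact (k+1)) :: complex)^2) \<le> q^(k+1)" for k
  proof -
    have "norm ((-1)^(k+2) * harm (k+1) * (z/2)^(2*(k+1)) / (of_nat (fact (k+1)) :: complex)^2)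
        = harm (k+1) * q^(k+1) / (fact (k+1))^2"
      unfolding q_def by (simp add: norm_divide norm_mult norm_power power_mult power_divide norm_harm power2_eq_square del: fact_Suc of_nat_Suc)
    also have "\<dots> \<le> q^(k+1)"
    proof -
      have "harm (k+1) \<le> real (k+1)" by (rule harm_le_n)
      also have "\<dots> \<le> fact (k+1)" by (metis fact_ge_self of_nat_fact of_nat_le_iff)
      also have "(fact (k+1)::real) \<le> (fact (k+1))^2"
        using fact_ge_1[of "k+1", where 'a=real] by (simp add: power2_eq_square)
      finally have h: "harm (k+1) \<le> (fact (k+1)::real)^2" .
      have "harm (k+1) * q^(k+1) \<le> (fact (k+1))^2 * q^(k+1)"
        by (rule mult_right_mono[OF h]) (use q0 in auto)
      moreover have pos: "0 < (fact (k+1)::real)^2" by simp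
      ultimately show ?thesis by (simp only: pos_divide_le_eq[OF pos] mult.commute)
    qed
    finally show ?thesis .
  qed
  show ?thesis using geom_bound[OF nb q0 q1] unfolding ytail_def q_def by simp
qed

lemma green_expand:
  fixes lam :: complex and r :: real
  assumes lam: "lam \<noteq> 0" and r: "r > 0"
  shows "\<i>/4 * hankel1_0 (lam * of_real r) =
    (gfun lam - of_real (ln r/(2*pi))) * besselJ0 (lam * of_real r) - ytail (lam * of_real r) / (2 * of_real pi)"
proof -
  have L: "Ln (lam * of_real r / 2) = of_real (ln r) + Ln (lam/2)"
    using Ln_times_of_real[of r "lam/2"] lam r by (simp add: mult.commute Ln_of_real)
  show ?thesis
    unfolding hankel1_0_def besselY0_def gfun_def ytail_def[symmetric] L
    by (simp add: field_simps)
qed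

lemma Ln_norm_bound:
  fixes w :: complex assumes "w \<noteq> 0"
  shows "norm (Ln w) \<le> \<bar>ln (norm w)\<bar> + pi"
proof -
  have "norm (Ln w) \<le> \<bar>Re (Ln w)\<bar> + \<bar>Im (Ln w)\<bar>" by (rule cmod_le)
  moreover have "\<bar>Im (Ln w)\<bar> \<le> pi" using mpi_less_Im_Ln[OF assms] Im_Ln_le_pi[OF assms] by auto
  ultimately show ?thesis using assms by simp
qed

lemma gfun_bound:
  fixes lam :: complex assumes lam: "lam \<noteq> 0"
  shows "norm (gfun lam) \<le> \<bar>ln (norm lam)\<bar> + 6"
proof -
  have n2: "norm (lam/2) = norm lam / 2" by (simp add: norm_divide)
  have l2: "\<bar>ln (norm lam / 2)\<bar> \<le> \<bar>ln (norm lam)\<bar> + 1"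
  proof -
    have "0 \<le> ln (2::real)" by simp
    moreover have "ln (norm lam/2) = ln (norm lam) - ln 2" using lam ln_div[of "norm lam" 2] by simp
    ultimately show ?thesis using ln_2_less_1 by arith
  qed
  have LB: "norm (Ln (lam/2)) \<le> \<bar>ln (norm lam)\<bar> + 1 + pi"
    using Ln_norm_bound[of "lam/2"] lam n2 l2 by auto
  have g1: "euler_mascheroni < (1::real)" using euler_mascheroni_less_13_over_22 by simp
  have g0: "0 < (euler_mascheroni::real)" by (rule euler_mascheroni_pos)
  have ne: "norm (euler_mascheroni :: complex) = euler_mascheroni"
    by (metis of_real_euler_mascheroni norm_of_real abs_of_pos g0)
  have "norm (gfun lam) \<le> norm (Ln (lam/2)) / (2*pi) + 1/4 + euler_mascheroni/(2*pi)"
  proof -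
    define a :: complex where "a = - (1 / (2 * of_real pi)) * Ln (lam/2)"
    define b :: complex where "b = \<i>/4"
    define c :: complex where "c = euler_mascheroni / (2 * of_real pi)"
    have "norm (a + b - c) \<le> norm (a + b) + norm c" by (rule norm_triangle_ineq4)
    also have "norm (a + b) \<le> norm a + norm b" by (rule norm_triangle_ineq)
    finally have "norm (gfun lam) \<le> norm a + norm b + norm c"
      unfolding gfun_def a_def b_def c_def by simp
    then have "norm (gfun lam) \<le> norm (- (1 / (2 * of_real pi)) * Ln (lam/2)) + norm (\<i>/4 :: complex)
        + norm (euler_mascheroni / (2 * of_real pi) :: complex)"
      unfolding a_def b_def c_def .
    also have "\<dots> = norm (Ln (lam/2)) / (2*pi) + 1/4 + euler_mascheroni/(2*pi)"
      by (simp add: norm_mult norm_divide ne)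
    finally show ?thesis .
  qed
  also have "\<dots> \<le> (\<bar>ln (norm lam)\<bar> + 1 + pi) / (2*pi) + 1/4 + 1/(2*pi)"
    by (intro add_mono divide_right_mono LB) (use g1 in auto)
  also have "\<dots> \<le> \<bar>ln (norm lam)\<bar> + 6"
  proof -
    have p: "pi > 3" by (rule pi_gt3)
    have q: "1 * \<bar>ln (norm lam)\<bar> \<le> (2*pi) * \<bar>ln (norm lam)\<bar>"
      by (rule mult_right_mono) (use p in auto)
    have "(\<bar>ln (norm lam)\<bar> + 1 + pi) / (2*pi) \<le> \<bar>ln (norm lam)\<bar> + 1"
      using p q by (simp add: field_simps)
    moreover have "1/(2*pi) \<le> 1" using p by simp
    ultimately show ?thesis by linarith
  qed
  finally show ?thesis .
qed

lemma remainder_bound: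
  fixes lam :: complex and r :: real
  assumes lam: "lam \<noteq> 0" and r: "r > 0" and small: "norm lam * r \<le> 1"
  shows "norm (- (\<i>/4 * hankel1_0 (lam * of_real r)) - (of_real (ln r/(2*pi)) - gfun lam))
     \<le> (norm (gfun lam) + \<bar>ln r\<bar> + 1) * (norm lam * r)^2"
proof -
  define z where "z = lam * of_real r"
  define g where "g = gfun lam"
  define L :: complex where "L = of_real (ln r/(2*pi))"
  have nz: "norm z = norm lam * r" using r by (simp add: z_def norm_mult)
  have e: "- (\<i>/4 * hankel1_0 z) - (L - g) = - ((g - L) * (besselJ0 z - 1)) + ytail z / (2 * of_real pi)"
    unfolding z_def g_def L_def green_expand[OF lam r] by (simp add: field_simps)
  have zz: "norm z \<le> 1" using small nz by simp
  have J: "norm (besselJ0 z - 1) \<le> norm z^2/3" using J0_bound[OF zz] .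
  have Y: "norm (ytail z) \<le> norm z^2/3" using ytail_bound[OF zz] .
  have nL: "norm L = \<bar>ln r\<bar>/(2*pi)" by (simp add: L_def norm_divide)
  have "norm (- ((g - L) * (besselJ0 z - 1)) + ytail z / (2 * of_real pi))
      \<le> norm (g - L) * norm (besselJ0 z - 1) + norm (ytail z) / (2*pi)"
    by (rule order_trans[OF norm_triangle_ineq]) (simp add: norm_mult norm_divide)
  also have "\<dots> \<le> (norm g + norm L) * (norm z^2/3) + (norm z^2/3) / (2*pi)"
    by (intro add_mono mult_mono divide_right_mono J Y norm_triangle_ineq4) auto
  also have "\<dots> \<le> (norm g + \<bar>ln r\<bar> + 1) * norm z^2"
  proof -
    have p: "pi > 3" by (rule pi_gt3)
    have a: "norm L \<le> \<bar>ln r\<bar>"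
    proof -
      have "norm L * 1 \<le> norm L * (2*pi)" by (rule mult_left_mono) (use p in auto)
      moreover have "norm L * (2*pi) = \<bar>ln r\<bar>" using nL by simp
      ultimately show ?thesis by simp
    qed
    have "(norm g + norm L) * (norm z^2/3) \<le> (norm g + \<bar>ln r\<bar>) * norm z^2"
      by (intro mult_mono) (use a in auto)
    moreover have "(norm z^2/3) / (2*pi) \<le> 1 * norm z^2"
    proof -
      have "1 * norm z^2 \<le> (6*pi) * norm z^2" by (rule mult_right_mono) (use p in auto)
      then show ?thesis using p by (simp add: field_simps)
    qed
    ultimately have "(norm g + norm L) * (norm z^2/3) + (norm z^2/3) / (2*pi)
        \<le> (norm g + \<bar>ln r\<bar>) * norm z^2 + 1 * norm z^2" by (rule add_mono)
    then show ?thesis by (simp add: distrib_right)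
  qed
  finally show ?thesis using e nz unfolding z_def g_def L_def by simp
qed

definition mn :: "complex^'n::finite^'m::finite \<Rightarrow> real" where
  "mn A = (\<Sum>i\<in>UNIV. \<Sum>j\<in>UNIV. norm (A$i$j))"
definition vn :: "complex^'n::finite \<Rightarrow> real" where
  "vn x = (\<Sum>i\<in>UNIV. norm (x$i))"

lemma vn_nonneg: "vn x \<ge> 0" unfolding vn_def by (simp add: sum_nonneg)
lemma mn_nonneg: "mn A \<ge> 0" unfolding mn_def by (simp add: sum_nonneg)

lemma vn_zero: "vn x = 0 \<Longrightarrow> x = 0"
  unfolding vn_def by (subst (asm) sum_nonneg_eq_0_iff) (auto simp: vec_eq_iff)

lemma comp_le_vn: "norm (x$i) \<le> vn x"
  unfolding vn_def by (rule member_le_sum) auto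

lemma vn_mult: "vn (A *v x) \<le> mn A * vn x"
proof -
  have "vn (A *v x) \<le> (\<Sum>i\<in>UNIV. \<Sum>j\<in>UNIV. norm (A$i$j) * vn x)"
    unfolding vn_def matrix_vector_mult_def
  proof (rule sum_mono)
    fix i
    have "norm ((\<chi> i. \<Sum>j\<in>UNIV. A $ i $ j * x $ j) $ i) \<le> (\<Sum>j\<in>UNIV. norm (A $ i $ j * x $ j))"
      by (simp add: norm_sum)
    also have "\<dots> \<le> (\<Sum>j\<in>UNIV. norm (A$i$j) * (\<Sum>i\<in>UNIV. norm (x$i)))"
      by (rule sum_mono) (simp add: norm_mult mult_left_mono comp_le_vn[unfolded vn_def])
    finally show "norm ((\<chi> i. \<Sum>j\<in>UNIV. A $ i $ j * x $ j) $ i) \<le> (\<Sum>j\<in>UNIV. norm (A$i$j) * (\<Sum>i\<in>UNIV. norm (x$i)))" .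
  qed
  also have "\<dots> = mn A * vn x" unfolding mn_def by (simp add: sum_distrib_right)
  finally show ?thesis .
qed

lemma mn_mult: "mn (A ** B) \<le> mn A * mn B"
proof -
  have "mn (A ** B) \<le> (\<Sum>i\<in>UNIV. \<Sum>k\<in>UNIV. norm (A$i$k) * mn B)"
    unfolding mn_def matrix_matrix_mult_def
  proof (rule sum_mono)
    fix i
    have "(\<Sum>j\<in>UNIV. norm ((\<chi> i j. \<Sum>k\<in>UNIV. A $ i $ k * B $ k $ j) $ i $ j))
        \<le> (\<Sum>j\<in>UNIV. \<Sum>k\<in>UNIV. norm (A $ i $ k) * norm (B $ k $ j))"
      by (rule sum_mono) (simp add: norm_sum norm_mult order_trans[OF norm_sum] sum_mono)
    also have "\<dots> = (\<Sum>k\<in>UNIV. norm (A $ i $ k) * (\<Sum>j\<in>UNIV. norm (B $ k $ j)))"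
      by (subst sum.swap) (simp add: sum_distrib_left)
    also have "\<dots> \<le> (\<Sum>k\<in>UNIV. norm (A $ i $ k) * (\<Sum>i\<in>UNIV. \<Sum>j\<in>UNIV. norm (B $ i $ j)))"
      by (rule sum_mono, rule mult_left_mono) (auto intro!: member_le_sum sum_nonneg)
    finally show "(\<Sum>j\<in>UNIV. norm ((\<chi> i j. \<Sum>k\<in>UNIV. A $ i $ k * B $ k $ j) $ i $ j))
        \<le> (\<Sum>k\<in>UNIV. norm (A $ i $ k) * (\<Sum>i\<in>UNIV. \<Sum>j\<in>UNIV. norm (B $ i $ j)))" .
  qed
  also have "\<dots> = mn A * mn B" unfolding mn_def by (simp add: sum_distrib_right)
  finally show ?thesis .
qed

lemma mn_add: "mn (A + B) \<le> mn A + mn B"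
  unfolding mn_def by (simp add: sum.distrib[symmetric] sum_mono norm_triangle_ineq)

lemma mn_diff: "mn (A - B) \<le> mn A + mn B"
  unfolding mn_def by (simp add: sum.distrib[symmetric] sum_mono norm_triangle_ineq4)

lemma mn_uminus: "mn (- A) = mn A"
  unfolding mn_def by simp

lemma norm_le_mn: "norm A \<le> mn A"
proof -
  have a: "norm x \<le> (\<Sum>i\<in>UNIV. norm (x$i))" for x :: "'x::real_normed_vector^'z::finite"
    unfolding norm_vec_def by (rule L2_set_le_sum) auto
  have "norm A \<le> (\<Sum>i\<in>UNIV. norm (A$i))" by (rule a)
  also have "\<dots> \<le> mn A" unfolding mn_def by (rule sum_mono) (rule a)
  finally show ?thesis .
qed

lemma minv_props:
  fixes A :: "'a::semiring_1^'n::finite^'n"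
  assumes "invertible A"
  shows "A ** matrix_inv A = mat 1 \<and> matrix_inv A ** A = mat 1"
  using assms unfolding invertible_def matrix_inv_def by (rule someI_ex)

lemma minv_unique:
  fixes A B :: "'a::field^'n::finite^'n"
  assumes AB: "A ** B = mat 1"
  shows "invertible A \<and> matrix_inv A = B"
proof -
  have BA: "B ** A = mat 1" using AB matrix_left_right_inverse by blast
  then have inv: "invertible A" using AB unfolding invertible_def by blast
  have C: "A ** matrix_inv A = mat 1" using minv_props[OF inv] by blast
  have "matrix_inv A = (B ** A) ** matrix_inv A" using BA by simp
  also have "\<dots> = B" by (simp add: matrix_mul_assoc[symmetric] C)
  finally show ?thesis using inv by simp
qed

lemma matrix_add_rdistrib': "((B + C) ** A) = (B ** A) + (C ** A)"
  by (vector matrix_matrix_mult_def sum.distrib[symmetric] field_simps)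

lemma vn_uminus: "vn (- x) = vn x" unfolding vn_def by simp

lemma perturb:
  fixes M X R :: "complex^'n::finite^'n"
  assumes MX: "M ** X = mat 1" and XM: "X ** M = mat 1" and small: "mn R * mn X \<le> 1/2"
  shows "invertible (M + R) \<and> mn (matrix_inv (M + R) - X) \<le> 2 * mn X * mn X * mn R"
proof -
  have ker: "\<forall>w. (M + R) *v w = 0 \<longrightarrow> w = 0"
  proof (intro allI impI)
    fix w assume "(M + R) *v w = 0"
    then have "M *v w = - (R *v w)" by (simp add: matrix_vector_mult_add_rdistrib eq_neg_iff_add_eq_0)
    then have "X *v (M *v w) = - (X *v (R *v w))"
      by (metis add.inverse_unique matrix_vector_right_distrib matrix_vector_mult_0_right add.right_inverse)
    then have w: "w = - (X *v (R *v w))" by (simp add: matrix_vector_mul_assoc XM)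
    have "vn w \<le> mn X * vn (R *v w)" by (subst w) (simp add: vn_uminus vn_mult)
    also have "\<dots> \<le> mn X * (mn R * vn w)" by (rule mult_left_mono[OF vn_mult mn_nonneg])
    also have "\<dots> \<le> 1/2 * vn w" using small vn_nonneg[of w]
      by (metis mult.assoc mult.commute mult_right_mono)
    finally have "vn w = 0" using vn_nonneg[of w] by simp
    then show "w = 0" by (rule vn_zero)
  qed
  then have inv: "invertible (M + R)"
    using matrix_left_invertible_ker invertible_left_inverse by blast
  define Y where "Y = matrix_inv (M + R)"
  have YG: "Y ** (M + R) = mat 1" using minv_props[OF inv] unfolding Y_def by blast
  have "X = (Y ** (M + R)) ** X" using YG by simp
  also have "\<dots> = Y ** (M ** X) + Y ** R ** X"
    by (simp add: matrix_mul_assoc matrix_add_ldistrib matrix_add_rdistrib')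
  also have "\<dots> = Y + Y ** R ** X" using MX by simp
  finally have XY: "X = Y + Y ** R ** X" .
  then have YX: "Y - X = - (Y ** R ** X)" by (simp add: algebra_simps)
  have b3: "mn (Y ** R ** X) \<le> mn Y * mn R * mn X"
  proof -
    have "mn (Y ** R ** X) \<le> mn (Y ** R) * mn X" by (rule mn_mult)
    also have "\<dots> \<le> mn Y * mn R * mn X" by (rule mult_right_mono[OF mn_mult mn_nonneg])
    finally show ?thesis .
  qed
  have "Y = X - Y ** R ** X" using XY by (metis add_diff_cancel_right')
  then have "mn Y = mn (X - Y ** R ** X)" by simp
  also have "\<dots> \<le> mn X + mn (Y ** R ** X)" by (rule mn_diff)
  also have "\<dots> \<le> mn X + mn Y * (mn R * mn X)" using b3 by (simp add: mult.assoc)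
  also have "\<dots> \<le> mn X + mn Y * (1/2)" using small mn_nonneg[of Y] by (intro add_left_mono mult_left_mono) auto
  finally have bY: "mn Y \<le> 2 * mn X" by simp
  have "mn (Y - X) \<le> mn Y * mn R * mn X" using YX b3 by (simp add: mn_uminus)
  also have "\<dots> \<le> (2 * mn X) * mn R * mn X"
    by (intro mult_right_mono bY mn_nonneg)
  finally show ?thesis using inv unfolding Y_def by (simp add: mult_ac)
qed

lemma mv_scale: "(A::complex^'n::finite^'m::finite) *v (c *s x) = c *s (A *v x)"
  by (simp add: matrix_vector_mult_def vec_eq_iff sum_distrib_left mult_ac)

lemma mv_comb: "(\<chi> i j. a * (P::complex^'n::finite^'m::finite)$i$j + Q$i$j) *v w = a *s (P *v w) + Q *v w"
  by (simp add: matrix_vector_mult_def vec_eq_iff sum_distrib_left sum.distrib algebra_simps)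

lemma card_ne0: "(of_nat CARD('n::finite) :: complex) \<noteq> 0" by simp

lemma Smat_mv: "(Smat :: complex^'n::finite^'n) *v w = w - (\<chi> i. (\<Sum>j\<in>UNIV. w$j) / of_nat CARD('n))"
proof -
  have "(Pmat :: complex^'n::finite^'n) *v w = (\<chi> i. (\<Sum>j\<in>UNIV. w$j) / of_nat CARD('n))"
    by (simp add: Pmat_def matrix_vector_mult_def sum_divide_distrib vec_eq_iff)
  then show ?thesis unfolding Smat_def by (simp add: matrix_vector_mult_diff_rdistrib)
qed

lemma mrange_Smat: "(w::complex^'n::finite) \<in> mrange Smat \<longleftrightarrow> (\<Sum>i\<in>UNIV. w$i) = 0"
proof
  assume "w \<in> mrange Smat"
  then obtain u where w: "w = Smat *v u" unfolding mrange_def by blast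
  have "(\<Sum>i\<in>UNIV. w$i) = (\<Sum>i\<in>UNIV. u$i) - of_nat CARD('n) * ((\<Sum>j\<in>UNIV. u$j) / of_nat CARD('n))"
    unfolding w Smat_mv by (simp add: sum_subtractf)
  also have "\<dots> = 0" using card_ne0[where 'n='n] by simp
  finally show "(\<Sum>i\<in>UNIV. w$i) = 0" .
next
  assume "(\<Sum>i\<in>UNIV. w$i) = 0"
  then have "Smat *v w = w" unfolding Smat_mv by (simp add: vec_eq_iff)
  then have "w = Smat *v w" by simp
  then show "w \<in> mrange Smat" unfolding mrange_def by blast
qed

lemma Smat_zero: "(Smat :: complex^'n::finite^'n) *v x = 0 \<longleftrightarrow> (\<exists>c. \<forall>i. x$i = c)"
proof
  assume h: "Smat *v x = 0"
  have "x$i = (\<Sum>j\<in>UNIV. x$j) / of_nat CARD('n)" for i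
  proof -
    have "(Smat *v x)$i = 0" using h by simp
    then show ?thesis unfolding Smat_mv by simp
  qed
  then show "\<exists>c. \<forall>i. x$i = c" by blast
next
  assume "\<exists>c. \<forall>i. x$i = c"
  then obtain c where c: "\<And>i. x$i = c" by blast
  have "(\<Sum>j\<in>UNIV. x$j) = of_nat CARD('n) * c" using c by simp
  then have e: "(\<Sum>j\<in>UNIV. x$j) / of_nat CARD('n) = c" using card_ne0[where 'n='n] by simp
  show "Smat *v x = 0" unfolding Smat_mv vec_eq_iff
  proof
    fix i show "(x - (\<chi> i. (\<Sum>j\<in>UNIV. x$j) / of_nat CARD('n))) $ i = 0 $ i"
      by (simp only: vector_minus_component vec_lambda_beta e c zero_index) simp
  qed
qed

lemma K_char:
  "v \<in> {v \<in> mrange Smat. (Smat ** (D::complex^'n::finite^'n) ** Smat) *v v = 0} \<longleftrightarrow>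
     (\<Sum>i\<in>UNIV. v$i) = 0 \<and> (\<exists>c. \<forall>i. (D *v v)$i = c)"
proof -
  have eq: "(Smat ** D ** Smat) *v v = Smat *v (D *v v)" if h: "(\<Sum>i\<in>UNIV. v$i) = 0"
  proof -
    have "Smat *v v = v" unfolding Smat_mv using h by (simp add: vec_eq_iff)
    then show ?thesis by (simp add: matrix_vector_mul_assoc[symmetric])
  qed
  show ?thesis
  proof
    assume "v \<in> {v \<in> mrange Smat. (Smat ** D ** Smat) *v v = 0}"
    then have a: "v \<in> mrange Smat" and b: "(Smat ** D ** Smat) *v v = 0" by auto
    from a have s0: "(\<Sum>i\<in>UNIV. v$i) = 0" by (simp only: mrange_Smat)
    with b eq have "Smat *v (D *v v) = 0" by simp
    then show "(\<Sum>i\<in>UNIV. v$i) = 0 \<and> (\<exists>c. \<forall>i. (D *v v)$i = c)" using Smat_zero s0 by blast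
  next
    assume h: "(\<Sum>i\<in>UNIV. v$i) = 0 \<and> (\<exists>c. \<forall>i. (D *v v)$i = c)"
    then have "Smat *v (D *v v) = 0" using Smat_zero by blast
    then have "(Smat ** D ** Smat) *v v = 0" using eq h by simp
    moreover have "v \<in> mrange Smat" using h by (simp only: mrange_Smat)
    ultimately show "v \<in> {v \<in> mrange Smat. (Smat ** D ** Smat) *v v = 0}" by simp
  qed
qed

lemma D_sym: "Dtilde \<alpha> y $ i $ j = Dtilde \<alpha> y $ j $ i"
  unfolding Dtilde_def by (simp add: dist_commute)

lemma D_real: "cnj (Dtilde \<alpha> y $ i $ j) = Dtilde \<alpha> y $ i $ j"
  unfolding Dtilde_def by simp

lemma bil_sym:
  assumes sym: "\<And>i j. (D::complex^'n::finite^'n) $ i $ j = D $ j $ i"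
  shows "(\<Sum>i\<in>UNIV. x$i * (D *v w)$i) = (\<Sum>j\<in>UNIV. (D *v x)$j * w$j)"
  unfolding matrix_vector_mult_def
  by (simp add: sum_distrib_left sum_distrib_right mult_ac) (subst sum.swap, simp add: sym mult_ac)

lemma final_arith:
  fixes s ng mR a b NN \<rho> \<Lambda> :: real
  assumes s0: "0 < s" and s1: "s \<le> 1" and ng0: "0 \<le> ng" and ngs: "ng * s \<le> 8"
    and mR: "mR \<le> NN * (ng + \<Lambda> + 1) * (s^2 * \<rho>)^2"
    and L0: "0 \<le> \<Lambda>" and NN0: "0 \<le> NN" and a1: "1 \<le> a" and b0: "0 \<le> b"
    and small: "s * (2 * (NN * \<rho>^2 * (\<Lambda> + 9) * (a + 8*b)^2)) \<le> 1"
  shows "mR * (a + b*ng)^2 \<le> 1/2"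
proof -
  define P where "P = a + b*ng"
  have P0: "0 \<le> P" unfolding P_def using a1 b0 ng0 by simp
  have h1: "(ng + \<Lambda> + 1) * s \<le> \<Lambda> + 9"
  proof -
    have "(\<Lambda> + 1) * s \<le> (\<Lambda> + 1) * 1" by (rule mult_left_mono) (use s1 L0 in auto)
    then show ?thesis using ngs by (simp add: distrib_right)
  qed
  have h2: "P * s \<le> a + 8*b"
  proof -
    have "a * s \<le> a * 1" by (rule mult_left_mono) (use s1 a1 in auto)
    moreover have "b * (ng * s) \<le> b * 8" by (rule mult_left_mono) (use ngs b0 in auto)
    ultimately show ?thesis unfolding P_def by (simp add: distrib_right mult.assoc)
  qed
  have h3: "(P * s)^2 \<le> (a + 8*b)^2" by (rule power_mono[OF h2]) (use P0 s0 in auto)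
  have h4: "0 \<le> (ng + \<Lambda> + 1) * s" using ng0 L0 s0 by simp
  have "mR * P^2 \<le> NN * (ng + \<Lambda> + 1) * (s^2 * \<rho>)^2 * P^2"
    by (rule mult_right_mono[OF mR]) simp
  also have "\<dots> = (NN * \<rho>^2 * s) * ((ng + \<Lambda> + 1) * s) * (P * s)^2"
    by (simp add: power2_eq_square algebra_simps)
  also have "\<dots> \<le> (NN * \<rho>^2 * s) * (\<Lambda> + 9) * (a + 8*b)^2"
    by (intro mult_mono mult_left_mono h1 h3) (use NN0 s0 L0 h4 in auto)
  also have "\<dots> = s * (NN * \<rho>^2 * (\<Lambda> + 9) * (a + 8*b)^2)" by (simp add: algebra_simps)
  also have "\<dots> \<le> 1/2" using small by simp
  finally show ?thesis unfolding P_def .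
qed

lemma ln_bound:
  fixes t :: real assumes t0: "0 < t" and t1: "t \<le> 1"
  shows "\<bar>ln t\<bar> * sqrt t \<le> 2"
proof -
  define s where "s = sqrt t"
  have s0: "0 < s" and s1: "s \<le> 1" using t0 t1 by (auto simp: s_def)
  have ts: "t = s^2" using t0 by (simp add: s_def)
  have "ln t = 2 * ln s" using s0 by (simp add: ts ln_realpow)
  moreover have "ln s \<le> 0" using s0 s1 by simp
  moreover have "- ln s * s \<le> 1"
  proof -
    have "ln (1/s) < 1/s" using s0 by (intro ln_less_self) simp
    then have "- ln s < 1/s" using s0 by (simp add: ln_div)
    then have "- ln s * s \<le> (1/s) * s" using s0 by (intro mult_right_mono) auto
    then show ?thesis using s0 by simp
  qed
  ultimately show ?thesis unfolding s_def[symmetric] by simp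
qed

theorem mainTheorem10:
  fixes \<alpha> :: "'n::finite \<Rightarrow> real" and y :: "'n \<Rightarrow> real^2" and T :: "complex^'n^'n"
  assumes distinct: "inj y"
    and singular: "\<exists>v\<in>mrange Smat. v \<noteq> 0 \<and> (Smat ** Dtilde \<alpha> y ** Smat) *v v = 0"
    and T_proj: "is_orth_proj T {v \<in> mrange Smat. (Smat ** Dtilde \<alpha> y ** Smat) *v v = 0}"
    and nonsing: "\<forall>v\<in>mrange T. (T ** Dtilde \<alpha> y ** Dtilde \<alpha> y ** T) *v v = 0 \<longrightarrow> v = 0"
  shows "(\<exists>u. u \<noteq> 0 \<and> mrange T = {c *s u | c. True})
    \<and> (\<exists>C \<delta>. \<delta> > 0 \<and> (\<forall>lam. Im lam \<ge> 0 \<and> lam \<noteq> 0 \<and> norm lam < \<delta> \<longrightarrow>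
          invertible (Gamma_mat \<alpha> y lam) \<and>
          norm (matrix_inv (Gamma_mat \<alpha> y lam)
                - (\<chi> i j. of_nat CARD('n) * gfun lam *
                     restr_inv T (Dtilde \<alpha> y ** Dtilde \<alpha> y) $ i $ j)) \<le> C))"
proof -
  define D where "D = Dtilde \<alpha> y"
  define K where "K = {v \<in> mrange Smat. (Smat ** D ** Smat) *v v = 0}"
  have Kc: "\<And>v. v \<in> K \<longleftrightarrow> (\<Sum>i\<in>UNIV. v$i) = 0 \<and> (\<exists>c. \<forall>i. (D *v v)$i = c)"
    unfolding K_def by (rule K_char)
  have Dsym: "\<And>i j. D $ i $ j = D $ j $ i" unfolding D_def by (rule D_sym)
  have Dreal: "\<And>i j. cnj (D $ i $ j) = D $ i $ j" unfolding D_def by (rule D_real)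
  have T1: "\<And>v. T *v v \<in> K" and T2: "\<And>v. v \<in> K \<Longrightarrow> T *v v = v"
    and T3: "\<And>v w. w \<in> K \<Longrightarrow> cinner (v - T *v v) w = 0"
    using T_proj unfolding is_orth_proj_def K_def D_def by auto
  have mT: "mrange T = K"
  proof
    show "mrange T \<subseteq> K" unfolding mrange_def using T1 by auto
    show "K \<subseteq> mrange T" unfolding mrange_def using T2 by (metis (mono_tags, lifting) mem_Collect_eq subsetI)
  qed
  have nons: "\<And>v. v \<in> K \<Longrightarrow> D *v (D *v v) = 0 \<Longrightarrow> v = 0"
  proof -
    fix v assume vK: "v \<in> K" and h: "D *v (D *v v) = 0"
    have "(T ** D ** D ** T) *v v = T *v (D *v (D *v (T *v v)))"
      by (simp add: matrix_vector_mul_assoc matrix_mul_assoc)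
    also have "\<dots> = 0" using T2[OF vK] h by simp
    finally show "v = 0" using nonsing vK mT unfolding D_def by blast
  qed
  obtain v0 where v0K: "v0 \<in> K" and v0nz: "v0 \<noteq> 0"
    using singular unfolding K_def D_def by blast
  obtain c0 where c0: "\<And>i. (D *v v0)$i = c0" using Kc v0K by blast
  have c0nz: "c0 \<noteq> 0"
  proof
    assume "c0 = 0"
    then have "D *v v0 = 0" using c0 by (simp add: vec_eq_iff)
    then have "v0 = 0" using nons[OF v0K] by simp
    then show False using v0nz by simp
  qed
  have sK: "\<And>t. t *s v0 \<in> K"
  proof -
    fix t
    have "(\<Sum>i\<in>UNIV. (t *s v0)$i) = t * (\<Sum>i\<in>UNIV. v0$i)" by (simp add: sum_distrib_left)
    also have "\<dots> = 0" using Kc v0K by simp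
    finally show "t *s v0 \<in> K" using Kc c0 by (auto simp: mv_scale)
  qed
  have Kspan: "\<And>w. w \<in> K \<Longrightarrow> \<exists>t. w = t *s v0"
  proof -
    fix w assume wK: "w \<in> K"
    obtain c where c: "\<And>i. (D *v w)$i = c" using Kc wK by blast
    define z where "z = w - (c/c0) *s v0"
    have Dz: "D *v z = 0" unfolding z_def
      by (simp add: vec_eq_iff matrix_vector_mult_diff_distrib mv_scale c c0 c0nz)
    have "(\<Sum>i\<in>UNIV. z$i) = (\<Sum>i\<in>UNIV. w$i) - (c/c0) * (\<Sum>i\<in>UNIV. v0$i)"
      by (simp add: z_def sum_subtractf sum_distrib_left)
    also have "\<dots> = 0" using Kc wK v0K by simp
    finally have "z \<in> K" using Kc Dz by auto
    then have "z = 0" using nons Dz by simp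
    then show "\<exists>t. w = t *s v0" unfolding z_def by auto
  qed
  have part1: "\<exists>u. u \<noteq> 0 \<and> mrange T = {c *s u | c. True}"
  proof (intro exI conjI)
    show "v0 \<noteq> 0" by (rule v0nz)
    show "mrange T = {c *s v0 | c. True}" unfolding mT using Kspan sK by blast
  qed

  have Dinj: "\<And>w. D *v w = 0 \<Longrightarrow> w = 0"
  proof -
    fix w assume Dw: "D *v w = 0"
    have "(\<Sum>i\<in>UNIV. v0$i * (D *v w)$i) = (\<Sum>j\<in>UNIV. (D *v v0)$j * w$j)"
      by (rule bil_sym[OF Dsym])
    then have "c0 * (\<Sum>j\<in>UNIV. w$j) = 0" using Dw by (simp add: c0 sum_distrib_left)
    then have sw: "(\<Sum>j\<in>UNIV. w$j) = 0" using c0nz by simp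
    have "w \<in> K" using Kc sw Dw by auto
    then obtain t where t: "w = t *s v0" using Kspan by blast
    obtain i0 :: 'n where True by simp
    have "(D *v w)$i0 = t * c0" using t by (simp add: mv_scale c0)
    then have "t = 0" using Dw c0nz by simp
    then show "w = 0" using t by simp
  qed
  obtain B where BD: "B ** D = mat 1"
    using Dinj matrix_left_invertible_ker[of D] by blast
  have DB: "D ** B = mat 1" using BD matrix_left_right_inverse by blast
  define ev1 :: "complex^'n" where "ev1 = (\<chi> i. 1)"
  define u where "u = B *v ev1"
  have Du: "D *v u = ev1" unfolding u_def by (simp add: matrix_vector_mul_assoc DB)
  have u_v0: "u = (1/c0) *s v0"
  proof -
    have "D *v (u - (1/c0) *s v0) = 0"
      by (simp add: matrix_vector_mult_diff_distrib mv_scale Du vec_eq_iff c0 c0nz ev1_def)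
    then have "u - (1/c0) *s v0 = 0" by (rule Dinj)
    then show ?thesis by simp
  qed
  have v0u: "v0 = c0 *s u" using c0nz by (simp add: u_v0 vector_smult_assoc)
  have uK: "u \<in> K" using sK u_v0 by simp
  have su: "(\<Sum>i\<in>UNIV. u$i) = 0" using Kc uK by simp
  have unz: "u \<noteq> 0" using v0nz v0u by auto
  have ureal: "\<And>i. cnj (u$i) = u$i"
  proof -
    define uc :: "complex^'n" where "uc = (\<chi> i. cnj (u$i))"
    have "D *v uc = ev1"
    proof -
      have "(D *v uc)$i = cnj ((D *v u)$i)" for i
        unfolding uc_def matrix_vector_mult_def by (simp add: Dreal)
      then show ?thesis using Du by (simp add: vec_eq_iff ev1_def)
    qed
    then have "D *v (uc - u) = 0" using Du by (simp add: matrix_vector_mult_diff_distrib)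
    then have "uc - u = 0" by (rule Dinj)
    then have "uc = u" by simp
    then show "\<And>i. cnj (u$i) = u$i" unfolding uc_def by (metis vec_lambda_beta)
  qed
  have colB: "\<And>j. (\<Sum>k\<in>UNIV. B$k$j) = u$j"
  proof -
    define r :: "complex^'n" where "r = (\<chi> j. \<Sum>k\<in>UNIV. B$k$j)"
    have "D *v r = ev1"
    proof -
      have "(D *v r)$i = 1" for i
      proof -
        have "(D *v r)$i = (\<Sum>j\<in>UNIV. D$i$j * (\<Sum>k\<in>UNIV. B$k$j))"
          unfolding r_def matrix_vector_mult_def by simp
        also have "\<dots> = (\<Sum>k\<in>UNIV. \<Sum>j\<in>UNIV. B$k$j * D$j$i)"
          by (simp add: sum_distrib_left Dsym[of i] mult.commute) (rule sum.swap)
        also have "\<dots> = (\<Sum>k\<in>UNIV. (B ** D)$k$i)" by (simp add: matrix_matrix_mult_def)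
        also have "\<dots> = 1" by (simp add: BD mat_def)
        finally show ?thesis .
      qed
      then show ?thesis by (simp add: vec_eq_iff ev1_def)
    qed
    then have "D *v (r - u) = 0" using Du by (simp add: matrix_vector_mult_diff_distrib)
    then have "r - u = 0" by (rule Dinj)
    then have "r = u" by simp
    then show "\<And>j. (\<Sum>k\<in>UNIV. B$k$j) = u$j" unfolding r_def by (metis vec_lambda_beta)
  qed
  have rowB: "\<And>i. (\<Sum>k\<in>UNIV. B$i$k) = u$i"
    unfolding u_def ev1_def matrix_vector_mult_def by simp
  have rowD: "\<And>i. (\<Sum>k\<in>UNIV. D$i$k * u$k) = 1"
    using Du unfolding matrix_vector_mult_def ev1_def by (simp add: vec_eq_iff)
  have colD: "\<And>j. (\<Sum>k\<in>UNIV. u$k * D$k$j) = 1"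
    using rowD by (simp add: Dsym mult.commute)

  define sc where "sc = cinner u u"
  have sc_real: "sc = (\<Sum>i\<in>UNIV. u$i * u$i)" unfolding sc_def cinner_def by (simp add: ureal)
  have scnz: "sc \<noteq> 0"
  proof -
    have "sc = of_real (\<Sum>i\<in>UNIV. (norm (u$i))^2)"
      unfolding sc_def cinner_def by (simp only: of_real_sum complex_norm_square)
    moreover have "(\<Sum>i\<in>UNIV. (norm (u$i))^2) > 0"
    proof -
      obtain i where "u$i \<noteq> 0" using unz by (auto simp: vec_eq_iff)
      then have "(norm (u$i))^2 > 0" by simp
      moreover have "(norm (u$i))^2 \<le> (\<Sum>i\<in>UNIV. (norm (u$i))^2)"
        by (rule member_le_sum) auto
      ultimately show ?thesis by linarith
    qed
    ultimately show ?thesis by (metis less_irrefl of_real_eq_0_iff)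
  qed
  have cin_u: "\<And>w. cinner w u = (\<Sum>j\<in>UNIV. w$j * u$j)" unfolding cinner_def by (simp add: ureal)
  have Tform: "\<And>w. T *v w = (cinner w u / sc) *s u"
  proof -
    fix w
    obtain t where t: "T *v w = t *s v0" using Kspan T1 by blast
    define c where "c = t * c0"
    have Tw: "T *v w = c *s u" unfolding c_def t v0u by (simp add: vector_smult_assoc)
    have "cinner (w - T *v w) u = 0" by (rule T3[OF uK])
    then have "cinner w u - c * sc = 0"
      unfolding Tw cinner_def sc_def by (simp add: sum_subtractf sum_distrib_left algebra_simps)
    then have "c = cinner w u / sc" using scnz by (simp add: field_simps)
    then show "T *v w = (cinner w u / sc) *s u" using Tw by simp
  qed
  have TT: "\<And>w. T *v (T *v w) = T *v w" using T1 T2 by blast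
  have Tlin: "\<And>a x z. T *v (a *s x + z) = a *s (T *v x) + T *v z"
    by (simp add: matrix_vector_right_distrib mv_scale)
  define NN :: complex where "NN = of_nat CARD('n)"
  have NNnz: "NN \<noteq> 0" unfolding NN_def by simp
  have cinD1: "cinner (D *v ev1) u = NN"
  proof -
    have "cinner (D *v ev1) u = (\<Sum>i\<in>UNIV. u$i * (D *v ev1)$i)" by (simp add: cin_u mult.commute)
    also have "\<dots> = (\<Sum>j\<in>UNIV. (D *v u)$j * ev1$j)" by (rule bil_sym[OF Dsym])
    also have "\<dots> = NN" by (simp add: Du ev1_def NN_def)
    finally show ?thesis .
  qed
  define \<kappa> where "\<kappa> = NN / sc"
  have knz: "\<kappa> \<noteq> 0" unfolding \<kappa>_def using NNnz scnz by simp
  have TDDT: "\<And>w. T *v (D *v (D *v (T *v w))) = \<kappa> *s (T *v w)"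
  proof -
    fix w
    define c where "c = cinner w u / sc"
    have "D *v (T *v w) = c *s ev1" by (simp add: Tform c_def mv_scale Du)
    then have "T *v (D *v (D *v (T *v w))) = c *s (T *v (D *v ev1))" by (simp add: mv_scale)
    also have "\<dots> = c *s ((NN / sc) *s u)" by (simp add: Tform cinD1)
    also have "\<dots> = \<kappa> *s (T *v w)" by (simp add: Tform c_def[symmetric] \<kappa>_def vector_smult_assoc mult.commute)
    finally show "T *v (D *v (D *v (T *v w))) = \<kappa> *s (T *v w)" .
  qed
  define A where "A = T ** (D ** D) ** T + (mat 1 - T)"
  have Av: "\<And>x. A *v x = \<kappa> *s (T *v x) + (x - T *v x)"
    unfolding A_def by (simp add: matrix_vector_mult_add_rdistrib matrix_vector_mult_diff_rdistrib
        matrix_vector_mul_assoc[symmetric] TDDT)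
  define Bm :: "complex^'n^'n" where "Bm = (\<chi> i j. (1/\<kappa> - 1) * T$i$j + mat 1 $i$j)"
  have Bmv: "\<And>w. Bm *v w = (1/\<kappa> - 1) *s (T *v w) + w" unfolding Bm_def by (simp add: mv_comb)
  have ABm: "A ** Bm = mat 1"
  proof -
    have "(A ** Bm) *v w = mat 1 *v w" for w
    proof -
      have TB: "T *v (Bm *v w) = (1/\<kappa>) *s (T *v w)"
      proof -
        have "T *v (Bm *v w) = (1/\<kappa> - 1) *s (T *v w) + T *v w" by (simp only: Bmv Tlin TT)
        also have "\<dots> = (1/\<kappa>) *s (T *v w)" by (simp add: vector_sub_rdistrib)
        finally show ?thesis .
      qed
      have "(A ** Bm) *v w = A *v (Bm *v w)" by (simp add: matrix_vector_mul_assoc)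
      also have "\<dots> = w" unfolding Av TB
        by (simp add: Bmv vector_smult_assoc knz vector_sub_rdistrib algebra_simps)
      finally show ?thesis by simp
    qed
    then show ?thesis by (simp add: matrix_eq)
  qed
  have invA: "matrix_inv A = Bm" using minv_unique[OF ABm] by blast
  have restr: "restr_inv T (D ** D) = (\<chi> i j. u$i * u$j / NN)"
  proof -
    have "restr_inv T (D ** D) *v w = (\<chi> i j. u$i * u$j / NN) *v w" for w
    proof -
      have "restr_inv T (D ** D) *v w = T *v (Bm *v (T *v w))"
        unfolding restr_inv_def A_def[symmetric] invA by (simp add: matrix_vector_mul_assoc matrix_mul_assoc)
      also have "\<dots> = (1/\<kappa>) *s (T *v w)"
      proof -
        have "T *v (Bm *v (T *v w)) = (1/\<kappa> - 1) *s (T *v w) + T *v w" by (simp only: Bmv Tlin TT)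
        also have "\<dots> = (1/\<kappa>) *s (T *v w)" by (simp add: vector_sub_rdistrib TT)
        finally show ?thesis .
      qed
      also have "\<dots> = (\<chi> i j. u$i * u$j / NN) *v w"
        unfolding Tform cin_u \<kappa>_def
        by (simp add: vec_eq_iff matrix_vector_mult_def sum_distrib_left sum_divide_distrib scnz field_simps)
      finally show ?thesis .
    qed
    then show ?thesis by (simp add: matrix_eq)
  qed

  define \<rho> where "\<rho> = 1 + (\<Sum>j\<in>UNIV. \<Sum>k\<in>UNIV. dist (y j) (y k))"
  define \<Lambda> where "\<Lambda> = (\<Sum>j\<in>UNIV. \<Sum>k\<in>UNIV. \<bar>ln (dist (y j) (y k))\<bar>)"
  define U :: "complex^'n^'n" where "U = (\<chi> i j. u$i * u$j)"
  define a where "a = 1 + mn B"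
  define b where "b = mn U"
  define NR :: real where "NR = real CARD('n) * real CARD('n)"
  define Kc where "Kc = NR * \<rho>^2 * (\<Lambda> + 9) * (a + 8*b)^2"
  define \<delta> where "\<delta> = min 1 (min (1/\<rho>) ((1/(2*Kc))^2))"
  have dist_le: "\<And>j k. dist (y j) (y k) \<le> (\<Sum>j\<in>UNIV. \<Sum>k\<in>UNIV. dist (y j) (y k))"
  proof -
    fix j k
    have "dist (y j) (y k) \<le> (\<Sum>k\<in>UNIV. dist (y j) (y k))" by (rule member_le_sum) auto
    also have "\<dots> \<le> (\<Sum>j\<in>UNIV. \<Sum>k\<in>UNIV. dist (y j) (y k))"
      by (rule member_le_sum) (auto intro: sum_nonneg)
    finally show "dist (y j) (y k) \<le> (\<Sum>j\<in>UNIV. \<Sum>k\<in>UNIV. dist (y j) (y k))" .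
  qed
  have rho1: "\<rho> \<ge> 1" unfolding \<rho>_def by (simp add: sum_nonneg)
  have rho_ge: "\<And>j k. dist (y j) (y k) \<le> \<rho>" using dist_le unfolding \<rho>_def by (meson add_increasing order_trans zero_le_one)
  have Lam_ge: "\<And>j k. \<bar>ln (dist (y j) (y k))\<bar> \<le> \<Lambda>"
  proof -
    fix j k
    have "\<bar>ln (dist (y j) (y k))\<bar> \<le> (\<Sum>k\<in>UNIV. \<bar>ln (dist (y j) (y k))\<bar>)" by (rule member_le_sum) auto
    also have "\<dots> \<le> \<Lambda>" unfolding \<Lambda>_def
      by (rule member_le_sum) (auto intro: sum_nonneg)
    finally show "\<bar>ln (dist (y j) (y k))\<bar> \<le> \<Lambda>" .
  qed
  have Lam0: "\<Lambda> \<ge> 0" unfolding \<Lambda>_def by (simp add: sum_nonneg)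
  have a1: "a \<ge> 1" unfolding a_def using mn_nonneg[of B] by simp
  have b0: "b \<ge> 0" unfolding b_def by (rule mn_nonneg)
  have c1: "1 \<le> real CARD('n)" by simp
  have "1 * 1 \<le> real CARD('n) * real CARD('n)" by (rule mult_mono) (use c1 in auto)
  then have NR1: "NR \<ge> 1" unfolding NR_def by simp
  have Kc0: "Kc > 0" unfolding Kc_def using NR1 rho1 Lam0 a1 b0
    by (intro mult_pos_pos) auto
  have delta0: "\<delta> > 0" unfolding \<delta>_def using rho1 Kc0 by simp
  have part2: "\<forall>lam. Im lam \<ge> 0 \<and> lam \<noteq> 0 \<and> norm lam < \<delta> \<longrightarrow>
          invertible (Gamma_mat \<alpha> y lam) \<and>
          norm (matrix_inv (Gamma_mat \<alpha> y lam)
                - (\<chi> i j. of_nat CARD('n) * gfun lam *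
                     restr_inv T (Dtilde \<alpha> y ** Dtilde \<alpha> y) $ i $ j)) \<le> 1 + mn B"
  proof (intro allI impI)
    fix lam :: complex
    assume H: "Im lam \<ge> 0 \<and> lam \<noteq> 0 \<and> norm lam < \<delta>"
    then have lam0: "lam \<noteq> 0" and tlt: "norm lam < \<delta>" by auto
    define t where "t = norm lam"
    define sq where "sq = sqrt t"
    have t0: "t > 0" using lam0 by (simp add: t_def)
    have t1: "t \<le> 1" using tlt unfolding t_def \<delta>_def by simp
    have trho: "t * \<rho> \<le> 1"
    proof -
      have "t < 1/\<rho>" using tlt unfolding t_def \<delta>_def by simp
      then show ?thesis using rho1 by (simp add: field_simps)
    qed
    have sq0: "0 < sq" and sq1: "sq \<le> 1" using t0 t1 by (auto simp: sq_def)
    have tsq: "t = sq^2" using t0 by (simp add: sq_def)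
    have sqsmall: "sq * (2 * Kc) \<le> 1"
    proof -
      have "t < (1/(2*Kc))^2" using tlt unfolding t_def \<delta>_def by simp
      then have "sqrt t < sqrt ((1/(2*Kc))^2)" by (rule real_sqrt_less_mono)
      then have "sq < 1/(2*Kc)" unfolding sq_def using Kc0 by simp
      then show ?thesis using Kc0 by (simp add: field_simps)
    qed
    define g where "g = gfun lam"
    have ngs: "norm g * sq \<le> 8"
    proof -
      have "norm g \<le> \<bar>ln t\<bar> + 6" unfolding g_def t_def by (rule gfun_bound[OF lam0])
      then have "norm g * sq \<le> (\<bar>ln t\<bar> + 6) * sq" by (rule mult_right_mono) (use sq0 in auto)
      also have "\<dots> = \<bar>ln t\<bar> * sq + 6 * sq" by (simp add: distrib_right)
      also have "\<dots> \<le> 2 + 6" using ln_bound[OF t0 t1] sq1 unfolding sq_def by linarith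
      finally show ?thesis by simp
    qed
    define M :: "complex^'n^'n" where "M = (\<chi> i j. D$i$j - g)"
    define X :: "complex^'n^'n" where "X = (\<chi> i j. B$i$j + g * (u$i * u$j))"
    have MX: "M ** X = mat 1"
    proof -
      have "(M ** X)$i$j = mat 1 $ i $ j" for i j
      proof -
        have "(M ** X)$i$j = (\<Sum>k\<in>UNIV. (D$i$k - g) * (B$k$j + g * (u$k * u$j)))"
          by (simp add: M_def X_def matrix_matrix_mult_def)
        also have "\<dots> = (\<Sum>k\<in>UNIV. D$i$k * B$k$j) + g * u$j * (\<Sum>k\<in>UNIV. D$i$k * u$k)
             - g * (\<Sum>k\<in>UNIV. B$k$j) - g * g * u$j * (\<Sum>k\<in>UNIV. u$k)"
        proof -
          have pw: "\<And>k. (D$i$k - g) * (B$k$j + g * (u$k * u$j)) =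
              D$i$k * B$k$j + g * u$j * (D$i$k * u$k) - g * B$k$j - g * g * u$j * u$k"
            by (simp add: algebra_simps)
          show ?thesis unfolding pw by (simp add: sum.distrib sum_subtractf sum_distrib_left)
        qed
        also have "\<dots> = (D ** B)$i$j" by (simp add: rowD colB su matrix_matrix_mult_def)
        also have "\<dots> = mat 1 $ i $ j" by (simp add: DB)
        finally show ?thesis .
      qed
      then show ?thesis by (simp add: vec_eq_iff)
    qed
    have XM: "X ** M = mat 1" using MX matrix_left_right_inverse by blast
    define R where "R = Gamma_mat \<alpha> y lam - M"
    have GMR: "Gamma_mat \<alpha> y lam = M + R" unfolding R_def by simp
    have Rb: "\<And>j k. norm (R$j$k) \<le> (norm g + \<Lambda> + 1) * (t*\<rho>)^2"
    proof -
      fix j k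
      show "norm (R$j$k) \<le> (norm g + \<Lambda> + 1) * (t*\<rho>)^2"
      proof (cases "j = k")
        case True
        then have "R$j$k = 0" by (simp add: R_def M_def Gamma_mat_def D_def Dtilde_def g_def)
        then show ?thesis using Lam0 by simp
      next
        case False
        define r where "r = dist (y j) (y k)"
        have r0: "r > 0" using False distinct unfolding r_def by (simp add: inj_eq)
        have Rjk: "R$j$k = - (\<i>/4 * hankel1_0 (lam * of_real r)) - (of_real (ln r/(2*pi)) - g)"
          using False by (simp add: R_def M_def Gamma_mat_def D_def Dtilde_def g_def greenG_def r_def dist_norm)
        have "t * r \<le> t * \<rho>" using rho_ge[of j k] t0 unfolding r_def by (intro mult_left_mono) auto
        then have tr: "norm lam * r \<le> 1" using trho unfolding t_def by linarith
        have "norm (R$j$k) \<le> (norm g + \<bar>ln r\<bar> + 1) * (norm lam * r)^2"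
          unfolding Rjk g_def by (rule remainder_bound[OF lam0 r0 tr])
        also have "\<dots> \<le> (norm g + \<Lambda> + 1) * (t*\<rho>)^2"
        proof (rule mult_mono)
          show "norm g + \<bar>ln r\<bar> + 1 \<le> norm g + \<Lambda> + 1" using Lam_ge[of j k] unfolding r_def by simp
          show "(norm lam * r)^2 \<le> (t*\<rho>)^2" unfolding t_def
            by (rule power_mono) (use rho_ge[of j k] r0 in \<open>auto simp: r_def intro: mult_left_mono\<close>)
        qed (use Lam0 in auto)
        finally show ?thesis .
      qed
    qed
    have mR: "mn R \<le> NR * (norm g + \<Lambda> + 1) * (sq^2 * \<rho>)^2"
    proof -
      have "mn R \<le> (\<Sum>j\<in>(UNIV::'n set). \<Sum>k\<in>(UNIV::'n set). (norm g + \<Lambda> + 1) * (t*\<rho>)^2)"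
        unfolding mn_def by (intro sum_mono Rb)
      also have "\<dots> = NR * ((norm g + \<Lambda> + 1) * (t*\<rho>)^2)" by (simp add: NR_def)
      finally show ?thesis by (simp add: tsq mult.assoc)
    qed
    have mX: "mn X \<le> a + b * norm g"
    proof -
      have "mn X \<le> (\<Sum>i\<in>UNIV. \<Sum>j\<in>UNIV. norm (B$i$j) + norm g * norm (U$i$j))"
        unfolding mn_def X_def U_def
        by (intro sum_mono) (simp add: norm_mult order_trans[OF norm_triangle_ineq])
      also have "\<dots> = mn B + norm g * mn U"
        by (simp add: mn_def sum.distrib sum_distrib_left)
      also have "\<dots> \<le> a + b * norm g" by (simp add: a_def b_def mult.commute)
      finally show ?thesis .
    qed
    have key: "mn R * (a + b * norm g)^2 \<le> 1/2"
      by (rule final_arith[OF sq0 sq1 norm_ge_zero ngs mR Lam0 _ a1 b0])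
         (use NR1 sqsmall in \<open>simp_all add: Kc_def\<close>)
    have P1: "1 \<le> a + b * norm g" using a1 b0 by (simp add: add_increasing2)
    have mX0: "0 \<le> mn X" by (rule mn_nonneg)
    have mR0: "0 \<le> mn R" by (rule mn_nonneg)
    have sm1: "mn R * mn X \<le> 1/2"
    proof -
      have "mn R * mn X \<le> mn R * (a + b * norm g)" by (rule mult_left_mono[OF mX mR0])
      also have "\<dots> \<le> mn R * (a + b * norm g)^2"
        by (rule mult_left_mono[OF _ mR0]) (use P1 in \<open>simp add: power2_eq_square\<close>)
      finally show ?thesis using key by simp
    qed
    from perturb[OF MX XM sm1]
    have inv: "invertible (M + R)" and bd: "mn (matrix_inv (M + R) - X) \<le> 2 * mn X * mn X * mn R"
      by auto
    have bd1: "2 * mn X * mn X * mn R \<le> 1"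
    proof -
      have "mn X * mn X \<le> (a + b * norm g)^2"
        unfolding power2_eq_square by (rule mult_mono[OF mX mX]) (use P1 mX0 in auto)
      then have h: "mn X * mn X * mn R \<le> (a + b * norm g)^2 * mn R"
        by (rule mult_right_mono[OF _ mR0])
      have e1: "2 * mn X * mn X * mn R = 2 * (mn X * mn X * mn R)" by simp
      have e2: "(a + b * norm g)^2 * mn R = mn R * (a + b * norm g)^2" by simp
      show ?thesis using h key e1 e2 by linarith
    qed
    have rest: "(\<chi> i j. of_nat CARD('n) * gfun lam * restr_inv T (Dtilde \<alpha> y ** Dtilde \<alpha> y) $ i $ j) = X - B"
      unfolding D_def[symmetric] restr g_def[symmetric]
      by (simp add: vec_eq_iff X_def NN_def[symmetric] NNnz)
    have "norm (matrix_inv (Gamma_mat \<alpha> y lam)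
                - (\<chi> i j. of_nat CARD('n) * gfun lam *
                     restr_inv T (Dtilde \<alpha> y ** Dtilde \<alpha> y) $ i $ j))
        = norm ((matrix_inv (M + R) - X) + B)" unfolding rest GMR by (simp add: algebra_simps)
    also have "\<dots> \<le> mn ((matrix_inv (M + R) - X) + B)" by (rule norm_le_mn)
    also have "\<dots> \<le> mn (matrix_inv (M + R) - X) + mn B" by (rule mn_add)
    also have "\<dots> \<le> 1 + mn B" using bd bd1 by simp
    finally show "invertible (Gamma_mat \<alpha> y lam) \<and>
          norm (matrix_inv (Gamma_mat \<alpha> y lam)
                - (\<chi> i j. of_nat CARD('n) * gfun lam *
                     restr_inv T (Dtilde \<alpha> y ** Dtilde \<alpha> y) $ i $ j)) \<le> 1 + mn B"
      using inv GMR by simp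
  qed
  show ?thesis using part1 part2 delta0 by blast
qed

end
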